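(* Let $f:S^{1}\rightarrow Y_{1}$ be any map. Then $f$ is inessential (null-homotopic) in $HA$ if and only if there exists $N$ such that $f$ is inessential in $Y^{N}$.
   Context: For $n\in\{1,2,3,\dots\}$ let $X_{n}\subset\mathbb{R}^{2}$ be the circle of radius $\frac{1}{n}$ centered at $(\frac{1}{n},0)$, and let $Y_{n}=\bigcup_{i=n}^{\infty}X_{i}$ (so $Y_1$ is the Hawaiian earring). Let $A_{n}\subset\mathbb{R}^{2}$ be the closed pinched annulus bounded by $X_{n}\cup X_{n+1}$, and let $Y^{n}=Y_{1}\cup A_{1}\cup\dots\cup A_{n}$ with the subspace topology from $\mathbb{R}^{2}$. The harmonic archipelago $HA$ has underlying set $\bigcup_{n=1}^{\infty}Y^{n}$, with a topology such that each $Y^{n}$ inherits its usual (Euclidean subspace) topology and moreover: (1) there is a sequence $z_{n}\in\operatorname{int}(A_{n})$ such that $\{z_{1},z_{2},\dots\}$ has no subsequential limit in $HA$, and (2) if $p\in HA$ is a subsequential limit of a sequence $y_{1},y_{2},\dots$ with $y_{n}\in\operatorname{int}(A_{n})$ for all $n$, then $p=(0,0)$. Here $Y_1\subset Y^N\subset HA$. *)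

theory Defs
  imports "HOL-Analysis.Analysis"
begin

text \<open>The plane R^2 is modelled by the complex numbers; the point (a,b) is a + b i.\<close>

definition circX :: "nat \<Rightarrow> complex set" where
  "circX n = sphere (complex_of_real (1 / real n)) (1 / real n)"

text \<open>Y_n = union of X_i for i >= n (Y_1 is the Hawaiian earring).\<close>
definition lowY :: "nat \<Rightarrow> complex set" where
  "lowY n = (\<Union>i\<in>{n..}. circX i)"

definition annA :: "nat \<Rightarrow> complex set" where
  "annA n = cball (complex_of_real (1 / real n)) (1 / real n)
            - ball (complex_of_real (1 / real (Suc n))) (1 / real (Suc n))"

definition upY :: "nat \<Rightarrow> complex set" where
  "upY n = lowY 1 \<union> (\<Union>i\<in>{1..n}. annA i)"

definition HA_set :: "complex set" where
  "HA_set = (\<Union>n\<in>{1..}. upY n)"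

definition subseq_limit :: "'a topology \<Rightarrow> (nat \<Rightarrow> 'a) \<Rightarrow> 'a \<Rightarrow> bool" where
  "subseq_limit T y p \<longleftrightarrow> (\<exists>r. strict_mono r \<and> limitin T (y \<circ> r) p sequentially)"

definition HA_topology :: "complex topology \<Rightarrow> bool" where
  "HA_topology T \<longleftrightarrow>
     topspace T = HA_set \<and>
     (\<forall>n\<ge>1. subtopology T (upY n) = top_of_set (upY n)) \<and>
     (\<exists>z. (\<forall>n\<ge>1. z n \<in> interior (annA n)) \<and> \<not> (\<exists>p. subseq_limit T z p)) \<and>
     (\<forall>y p. (\<forall>n\<ge>1. y n \<in> interior (annA n)) \<and> subseq_limit T y p \<longrightarrow> p = 0)"

definition inessential_in :: "complex topology \<Rightarrow> (complex \<Rightarrow> complex) \<Rightarrow> bool" where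
  "inessential_in X f \<longleftrightarrow>
     (\<exists>c. homotopic_with (\<lambda>_. True) (top_of_set (sphere 0 1)) X f (\<lambda>_. c))"

end

theory Submission
  imports Defs
begin


definition qf :: "complex \<Rightarrow> real" where "qf z = Re (2 / z)"

lemma qf_eq: "qf z = 2 * Re z / ((Re z)\<^sup>2 + (Im z)\<^sup>2)"
  by (simp add: qf_def Re_divide power2_eq_square)

lemma qf_0 [simp]: "qf 0 = 0" by (simp add: qf_def)

lemma dist_r_le:
  assumes r: "r > 0"
  shows "dist (complex_of_real r) z \<le> r \<longleftrightarrow> z = 0 \<or> 1/r \<le> qf z"
proof -
  have d: "(dist (complex_of_real r) z)\<^sup>2 = (Re z - r)\<^sup>2 + (Im z)\<^sup>2"
    by (simp add: dist_norm cmod_power2 power2_commute)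
  have "dist (complex_of_real r) z \<le> r \<longleftrightarrow> (dist (complex_of_real r) z)\<^sup>2 \<le> r\<^sup>2"
    using r by (simp add: power_mono_iff)
  also have "\<dots> \<longleftrightarrow> (Re z)\<^sup>2 + (Im z)\<^sup>2 \<le> 2 * r * Re z"
    unfolding d by (simp add: power2_eq_square algebra_simps)
  also have "\<dots> \<longleftrightarrow> z = 0 \<or> 1/r \<le> qf z"
  proof (cases "z = 0")
    case False
    then have s: "(Re z)\<^sup>2 + (Im z)\<^sup>2 > 0"
      using complex_eq_iff by (simp add: sum_power2_gt_zero_iff)
    show ?thesis using False s r
      by (simp add: qf_eq field_simps)
  qed simp
  finally show ?thesis .
qed

lemma dist_r_less:
  assumes r: "r > 0"
  shows "dist (complex_of_real r) z < r \<longleftrightarrow> z \<noteq> 0 \<and> 1/r < qf z"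
proof -
  have d: "(dist (complex_of_real r) z)\<^sup>2 = (Re z - r)\<^sup>2 + (Im z)\<^sup>2"
    by (simp add: dist_norm cmod_power2 power2_commute)
  have "dist (complex_of_real r) z < r \<longleftrightarrow> (dist (complex_of_real r) z)\<^sup>2 < r\<^sup>2"
    using r by (auto intro: power_strict_mono dest: power2_less_imp_less)
  also have "\<dots> \<longleftrightarrow> (Re z)\<^sup>2 + (Im z)\<^sup>2 < 2 * r * Re z"
    unfolding d by (simp add: power2_eq_square algebra_simps)
  also have "\<dots> \<longleftrightarrow> z \<noteq> 0 \<and> 1/r < qf z"
  proof (cases "z = 0")
    case False
    then have s: "(Re z)\<^sup>2 + (Im z)\<^sup>2 > 0"
      using complex_eq_iff by (simp add: sum_power2_gt_zero_iff)
    show ?thesis using False s r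
      by (simp add: qf_eq field_simps)
  qed simp
  finally show ?thesis .
qed

lemma mem_cballn: "n \<ge> 1 \<Longrightarrow> z \<in> cball (complex_of_real (1 / real n)) (1 / real n) \<longleftrightarrow> z = 0 \<or> real n \<le> qf z"
  using dist_r_le[of "1 / real n" z] by simp

lemma mem_balln: "n \<ge> 1 \<Longrightarrow> z \<in> ball (complex_of_real (1 / real n)) (1 / real n) \<longleftrightarrow> z \<noteq> 0 \<and> real n < qf z"
  using dist_r_less[of "1 / real n" z] by simp

lemma mem_circX: "n \<ge> 1 \<Longrightarrow> z \<in> circX n \<longleftrightarrow> z = 0 \<or> qf z = real n"
  using dist_r_less[of "1 / real n" z] dist_r_le[of "1 / real n" z]
  by (auto simp: circX_def)

lemma mem_annA: "n \<ge> 1 \<Longrightarrow> z \<in> annA n \<longleftrightarrow> z = 0 \<or> (real n \<le> qf z \<and> qf z \<le> real n + 1)"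
  using mem_cballn[of n z] mem_balln[of "Suc n" z] by (auto simp: annA_def)

lemma mem_lowY1: "z \<in> lowY 1 \<longleftrightarrow> z = 0 \<or> (\<exists>i\<ge>1. qf z = real i)"
proof -
  have "z \<in> lowY 1 \<longleftrightarrow> (\<exists>i\<ge>1. z = 0 \<or> qf z = real i)"
    by (auto simp: lowY_def mem_circX)
  then show ?thesis by auto
qed

lemma mem_upY: assumes "N \<ge> 1"
  shows "z \<in> upY N \<longleftrightarrow> z = 0 \<or> (\<exists>i\<ge>1. qf z = real i) \<or> (1 \<le> qf z \<and> qf z \<le> real N + 1)"
proof -
  have "(\<exists>i\<in>{1..N}. z \<in> annA i) \<longleftrightarrow> z = 0 \<or> (1 \<le> qf z \<and> qf z \<le> real N + 1)"
  proof
    assume "\<exists>i\<in>{1..N}. z \<in> annA i"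
    then obtain i where "i \<in> {1..N}" "z \<in> annA i" by blast
    then show "z = 0 \<or> (1 \<le> qf z \<and> qf z \<le> real N + 1)"
      using mem_annA[of i z] by auto
  next
    assume h: "z = 0 \<or> (1 \<le> qf z \<and> qf z \<le> real N + 1)"
    show "\<exists>i\<in>{1..N}. z \<in> annA i"
    proof (cases "z = 0")
      case True then show ?thesis using assms mem_annA[of 1 z] by (intro bexI[of _ 1]) auto
    next
      case False
      then have q: "1 \<le> qf z" "qf z \<le> real N + 1" using h by auto
      define i where "i = min N (nat \<lfloor>qf z\<rfloor>)"
      have "i \<ge> 1" using q assms by (auto simp: i_def le_nat_iff)
      moreover have "real i \<le> qf z"
        using q by (auto simp: i_def min_def) linarith
      moreover have "qf z \<le> real i + 1"
        using q by (auto simp: i_def min_def)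
      ultimately show ?thesis using assms mem_annA[of i z] by (intro bexI[of _ i]) (auto simp: i_def)
    qed
  qed
  moreover have "z \<in> upY N \<longleftrightarrow> z \<in> lowY 1 \<or> (\<exists>i\<in>{1..N}. z \<in> annA i)"
    by (simp add: upY_def)
  ultimately show ?thesis using mem_lowY1[of z] by auto
qed

lemma mem_HA: "z \<in> HA_set \<longleftrightarrow> z = 0 \<or> 1 \<le> qf z"
proof
  assume "z \<in> HA_set"
  then obtain n where "n \<ge> 1" "z \<in> upY n" by (auto simp: HA_set_def)
  then show "z = 0 \<or> 1 \<le> qf z" using mem_upY[of n z] by auto
next
  assume h: "z = 0 \<or> 1 \<le> qf z"
  define n where "n = max 1 (nat \<lceil>qf z\<rceil>)"
  have "n \<ge> 1" by (simp add: n_def)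
  moreover have "z \<in> upY n" using h \<open>n \<ge> 1\<close> mem_upY[of n z]
    by (auto simp: n_def) linarith
  ultimately show "z \<in> HA_set" by (auto simp: HA_set_def)
qed

lemma interior_annA: assumes "n \<ge> 1"
  shows "interior (annA n) = {z. real n < qf z \<and> qf z < real n + 1}"
proof -
  have "interior (annA n) = ball (complex_of_real (1 / real n)) (1 / real n)
          - cball (complex_of_real (1 / real (Suc n))) (1 / real (Suc n))"
    using assms by (simp add: annA_def interior_diff)
  then show ?thesis using assms mem_balln[of n] mem_cballn[of "Suc n"]
    by auto
qed

lemma norm_le_qf: assumes "0 < qf z" shows "cmod z \<le> 2 / qf z"
proof -
  have z: "z \<noteq> 0" using assms by auto
  then have s: "(Re z)\<^sup>2 + (Im z)\<^sup>2 > 0"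
    using complex_eq_iff by (simp add: sum_power2_gt_zero_iff)
  have c2: "(cmod z)\<^sup>2 = (Re z)\<^sup>2 + (Im z)\<^sup>2" by (simp add: cmod_power2)
  have "Re z \<le> cmod z" by (rule complex_Re_le_cmod)
  have "cmod z * qf z = 2 * Re z / cmod z"
    using s z unfolding qf_eq c2[symmetric] by (simp add: power2_eq_square field_simps)
  also have "\<dots> \<le> 2" using \<open>Re z \<le> cmod z\<close> z by (simp add: divide_le_eq)
  finally show ?thesis using assms by (simp add: field_simps)
qed

lemma closed_annA: "closed (annA n)"
  unfolding annA_def by (intro closed_Diff closed_cball open_ball)

lemma continuous_qf: assumes "z \<noteq> 0" shows "isCont qf z"
proof -
  have "isCont (\<lambda>z. 2 / z) z" using assms by (auto intro!: continuous_intros)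
  then have "isCont (\<lambda>z. Re (2 / z)) z" by (rule continuous_Re)
  then show ?thesis by (simp add: qf_def[abs_def])
qed

lemma closed_qf_preimage:
  assumes "closed S"
  shows "closed ({0} \<union> {z. z \<noteq> 0 \<and> qf z \<in> S})"
  unfolding closed_sequential_limits
proof (intro allI impI, elim conjE)
  fix x l assume x: "\<forall>n. x n \<in> {0} \<union> {z. z \<noteq> 0 \<and> qf z \<in> S}" and l: "x \<longlonglongrightarrow> l"
  show "l \<in> {0} \<union> {z. z \<noteq> 0 \<and> qf z \<in> S}"
  proof (cases "l = 0")
    case False
    have ev: "eventually (\<lambda>n. x n \<noteq> 0) sequentially"
      using l False by (rule tendsto_imp_eventually_ne)
    have "(\<lambda>n. qf (x n)) \<longlonglongrightarrow> qf l"
      using l continuous_qf[OF False] by (rule isCont_tendsto_compose[rotated])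
    moreover have "eventually (\<lambda>n. qf (x n) \<in> S) sequentially"
      using ev x by (auto elim: eventually_mono)
    ultimately have "qf l \<in> S" using assms by (intro Lim_in_closed_set) auto
    then show ?thesis using False by auto
  qed auto
qed

lemma closed_upY: assumes "N \<ge> 1" shows "closed (upY N)"
proof -
  define S where "S = {x::real. \<exists>i::nat\<ge>1. x = real i} \<union> {1..real N + 1}"
  have cS: "closed S" unfolding S_def
  proof (intro closed_Un closed_atLeastAtMost discrete_imp_closed[of 1])
    show "\<forall>x\<in>{x::real. \<exists>i::nat\<ge>1. x = real i}. \<forall>y\<in>{x::real. \<exists>i::nat\<ge>1. x = real i}. dist y x < 1 \<longrightarrow> y = x"
      by (auto simp: dist_real_def)
  qed simp
  have "upY N = {0} \<union> {z. z \<noteq> 0 \<and> qf z \<in> S}"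
    using mem_upY[OF assms] by (auto simp: S_def)
  then show ?thesis using closed_qf_preimage[OF cS] by simp
qed



lemma subsubseq_tendsto:
  fixes x :: "nat \<Rightarrow> 'a::metric_space"
  assumes "\<And>r::nat\<Rightarrow>nat. strict_mono r \<Longrightarrow> \<exists>r'::nat\<Rightarrow>nat. strict_mono r' \<and> (x \<circ> r \<circ> r') \<longlonglongrightarrow> l"
  shows "x \<longlonglongrightarrow> l"
proof (rule ccontr)
  assume "\<not> x \<longlonglongrightarrow> l"
  then obtain e where e: "e > 0" and ne: "\<not> eventually (\<lambda>n. dist (x n) l < e) sequentially"
    unfolding tendsto_iff by auto
  have "infinite {n. \<not> dist (x n) l < e}"
    using ne by (simp add: eventually_sequentially not_eventually frequently_def
        cofinite_eq_sequentially[symmetric] eventually_cofinite)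
  then obtain r :: "nat \<Rightarrow> nat" where r: "strict_mono r" "\<And>n. r n \<in> {n. \<not> dist (x n) l < e}"
    using infinite_enumerate by blast
  obtain r' where r': "strict_mono r'" "(x \<circ> r \<circ> r') \<longlonglongrightarrow> l" using assms[OF r(1)] by blast
  then have "eventually (\<lambda>n. dist ((x \<circ> r \<circ> r') n) l < e) sequentially"
    using e unfolding tendsto_iff by blast
  then obtain n where "dist ((x \<circ> r \<circ> r') n) l < e"
    by (meson eventually_sequentially order.refl)
  then show False using r(2)[of "r' n"] by simp
qed

lemma level_dichotomy:
  fixes lv :: "nat \<Rightarrow> nat"
  shows "(\<exists>n (r::nat\<Rightarrow>nat). strict_mono r \<and> (\<forall>k. lv (r k) = n)) \<or> (\<exists>r::nat\<Rightarrow>nat. strict_mono r \<and> strict_mono (lv \<circ> r))"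
proof (cases "\<exists>n. infinite {j. lv j = n}")
  case True
  then obtain n where "infinite {j. lv j = n}" by blast
  then obtain r :: "nat \<Rightarrow> nat" where "strict_mono r" "\<And>k. r k \<in> {j. lv j = n}"
    using infinite_enumerate by blast
  then show ?thesis by (intro disjI1 exI[of _ n] exI[of _ r]) auto
next
  case False
  then have fin: "finite {j. lv j \<le> M}" for M
  proof -
    have "{j. lv j \<le> M} = (\<Union>n\<in>{..M}. {j. lv j = n})" by auto
    then show ?thesis using False by auto
  qed
  have ex: "\<exists>j'. j' > j \<and> lv j' > lv j" for j
  proof -
    have "finite ({..j} \<union> {j'. lv j' \<le> lv j} )" using fin by auto
    then obtain j' where "j' \<notin> {..j} \<union> {j'. lv j' \<le> lv j}"
      using ex_new_if_finite[OF infinite_UNIV_nat] by blast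
    then show ?thesis by (intro exI[of _ j']) auto
  qed
  define s where "s j = (SOME j'. j' > j \<and> lv j' > lv j)" for j
  have s: "s j > j" "lv (s j) > lv j" for j
    using someI_ex[OF ex[of j]] by (auto simp: s_def)
  define r where "r k = (s ^^ k) 0" for k
  have "strict_mono r" unfolding strict_mono_Suc_iff r_def using s by simp
  moreover have "strict_mono (lv \<circ> r)" unfolding strict_mono_Suc_iff r_def using s by simp
  ultimately show ?thesis by blast
qed



lemma cont_seq:
  fixes f :: "'a::{first_countable_topology,t2_space} \<Rightarrow> 'b::topological_space"
  assumes "continuous_on S f" "a \<in> S" "\<And>n. x n \<in> S" "x \<longlonglongrightarrow> a"
  shows "(f \<circ> x) \<longlonglongrightarrow> f a"
  using assms unfolding continuous_on_sequentially by blast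

lemma frac_lt1: "\<bar>s / (1 + \<bar>s\<bar>)\<bar> < (1::real)"
proof -
  have "(0::real) < 1 + \<bar>s\<bar>" by (simp add: add_pos_nonneg)
  then show ?thesis by (simp add: abs_divide divide_less_eq)
qed

lemma annulus_retraction:
  assumes n: "n \<ge> 1" and zn: "real n < qf zn" "qf zn < real n + 1"
  shows "\<exists>g. continuous_on (annA n - {zn}) g
           \<and> (\<forall>z \<in> annA n - {zn}. g z = 0 \<or> qf (g z) = real n \<or> qf (g z) = real n + 1)
           \<and> (\<forall>z \<in> annA n. (z = 0 \<or> qf z = real n \<or> qf z = real n + 1) \<longrightarrow> g z = z)"
proof -
  define K where "K = cbox (Complex 0 (-1)) (Complex 1 1)"
  have memK: "w \<in> K \<longleftrightarrow> 0 \<le> Re w \<and> Re w \<le> 1 \<and> \<bar>Im w\<bar> \<le> 1" for w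
    by (auto simp: K_def in_cbox_complex_iff)
  have intK: "interior K = {w. 0 < Re w \<and> Re w < 1 \<and> \<bar>Im w\<bar> < 1}"
    by (auto simp: K_def interior_cbox in_box_complex_iff)
  have frK: "w \<in> frontier K \<longleftrightarrow> w \<in> K \<and> (Re w = 0 \<or> Re w = 1 \<or> \<bar>Im w\<bar> = 1)" for w
    by (auto simp: K_def frontier_cbox in_box_complex_iff in_cbox_complex_iff)
  define D where "D w = complex_of_real ((real n + Re w) * (1 - \<bar>Im w\<bar>)) + \<i> * complex_of_real (Im w)" for w
  define P where "P w = complex_of_real (2 * (1 - \<bar>Im w\<bar>)) / D w" for w
  define Q where "Q z = (if z = 0 then \<i> else Complex (qf z - real n) (Im (2 / z) / (1 + \<bar>Im (2 / z)\<bar>)))" for z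
  have D0: "D w \<noteq> 0" if "w \<in> K" for w
  proof -
    have "Re (D w) = (real n + Re w) * (1 - \<bar>Im w\<bar>)" "Im (D w) = Im w" by (simp_all add: D_def)
    show ?thesis
    proof (cases "\<bar>Im w\<bar> < 1")
      case True
      have "real n + Re w > 0" using n that memK[of w] by simp
      then have "Re (D w) > 0" using True \<open>Re (D w) = _\<close> by simp
      then show ?thesis by auto
    next
      case False
      then have "Im w \<noteq> 0" by auto
      then show ?thesis using \<open>Im (D w) = _\<close> by auto
    qed
  qed
  have contP: "continuous_on K P"
    unfolding P_def D_def using D0 unfolding D_def
    by (intro continuous_intros) auto
  have F2: "P w \<noteq> 0 \<and> qf (P w) = real n + Re w \<and> Im (2 / P w) = Im w / (1 - \<bar>Im w\<bar>)"
    if "w \<in> K" "\<bar>Im w\<bar> < 1" for w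
  proof -
    have c: "1 - \<bar>Im w\<bar> > 0" using that by simp
    have "P w \<noteq> 0" using D0[OF that(1)] c by (simp add: P_def)
    moreover have "2 / P w = D w / complex_of_real (1 - \<bar>Im w\<bar>)"
      using D0[OF that(1)] c by (simp add: P_def field_simps)
    ultimately show ?thesis using c
      by (simp add: qf_def D_def Re_divide_of_real Im_divide_of_real)
  qed
  have F3: "P w = 0" if "\<bar>Im w\<bar> = 1" for w using that by (simp add: P_def)
  have F4: "Q z \<in> K \<and> P (Q z) = z" if "z \<in> annA n" for z
  proof (cases "z = 0")
    case True then show ?thesis by (simp add: Q_def memK P_def)
  next
    case False
    define s where "s = Im (2 / z)"
    have q: "real n \<le> qf z" "qf z \<le> real n + 1" using that False mem_annA[OF n] by auto
    have b: "\<bar>s / (1 + \<bar>s\<bar>)\<bar> < 1"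
    proof -
      have "(0::real) < 1 + \<bar>s\<bar>" by (simp add: add_pos_nonneg)
      then show ?thesis by (simp add: abs_divide divide_less_eq)
    qed
    have QK: "Q z \<in> K" using q b False by (simp add: Q_def memK s_def)
    have eqb: "s / (1 + \<bar>s\<bar>) / (1 - \<bar>s / (1 + \<bar>s\<bar>)\<bar>) = s"
    proof -
      have pos: "(0::real) < 1 + \<bar>s\<bar>" by (simp add: add_pos_nonneg)
      then have "1 - \<bar>s / (1 + \<bar>s\<bar>)\<bar> = 1 / (1 + \<bar>s\<bar>)"
        by (simp add: abs_divide field_simps)
      then show ?thesis using pos by simp
    qed
    have "2 / P (Q z) = 2 / z"
      using F2[OF QK] b False eqb
      by (auto simp: complex_eq_iff Q_def qf_def s_def)
    then have "P (Q z) = z" using F2[OF QK] b False by (simp add: Q_def s_def field_simps)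
    then show ?thesis using QK by simp
  qed
  have F5: "Q (P w) = w" if "w \<in> K" "\<bar>Im w\<bar> < 1" for w
  proof -
    have c: "1 - \<bar>Im w\<bar> > 0" using that by simp
    have e1: "\<bar>Im w / (1 - \<bar>Im w\<bar>)\<bar> = \<bar>Im w\<bar> / (1 - \<bar>Im w\<bar>)"
      using c by (simp add: abs_divide)
    have e2: "1 + \<bar>Im w\<bar> / (1 - \<bar>Im w\<bar>) = 1 / (1 - \<bar>Im w\<bar>)"
      using c by (simp add: field_simps)
    have "(Im w / (1 - \<bar>Im w\<bar>)) / (1 + \<bar>Im w / (1 - \<bar>Im w\<bar>)\<bar>) = Im w"
      unfolding e1 e2 using c by simp
    moreover have P0: "P w \<noteq> 0" and qq: "qf (P w) = real n + Re w"
      and ii: "Im (2 / P w) = Im w / (1 - \<bar>Im w\<bar>)" using F2[OF that] by auto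
    ultimately have "Q (P w) = Complex (Re w) (Im w)"
      unfolding Q_def using P0 by (simp only: if_False qq ii) simp
    then show ?thesis by simp
  qed
  define p where "p = Q zn"
  have zn0: "zn \<noteq> 0" using zn n by auto
  have znA: "zn \<in> annA n" using zn n mem_annA[OF n] by auto
  have pint: "p \<in> interior K"
  proof -
    have "\<bar>Im (2 / zn) / (1 + \<bar>Im (2 / zn)\<bar>)\<bar> < 1" by (rule frac_lt1)
    then show ?thesis using zn zn0 by (simp add: intK p_def Q_def)
  qed
  have Pp: "P p = zn" using F4[OF znA] by (simp add: p_def)
  have intne: "interior K \<noteq> {}" using pint by auto
  have "frontier K retract_of (UNIV - {p})"
    using rel_frontier_retract_of_punctured_affine_hull[of K p] pint intne
    by (simp add: K_def rel_frontier_nonempty_interior rel_interior_nonempty_interior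
        affine_hull_nonempty_interior bounded_cbox convex_box)
  then obtain r where r: "continuous_on (UNIV - {p}) r" "\<And>x. x \<noteq> p \<Longrightarrow> r x \<in> frontier K"
    "\<And>x. x \<in> frontier K \<Longrightarrow> r x = x"
    unfolding retract_of_def retraction_def by auto
  have frKK: "x \<in> frontier K \<Longrightarrow> x \<in> K" for x using frK by auto
  define g where "g z = P (r (Q z))" for z
  have iK: "\<i> \<in> frontier K" by (simp add: frK memK)
  have G1: "g (P w) = P (r w)" if "w \<in> K" "w \<noteq> p" for w
  proof (cases "\<bar>Im w\<bar> = 1")
    case True
    then have "w \<in> frontier K" using that frK by auto
    then show ?thesis using True F3 r(3)[OF iK] r(3)[of w] by (simp add: g_def Q_def P_def)
  next
    case False
    then have "\<bar>Im w\<bar> < 1" using that memK by auto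
    then show ?thesis using F5 that by (simp add: g_def)
  qed
  have QnP: "Q z \<noteq> p" if "z \<in> annA n" "z \<noteq> zn" for z
    using F4[OF that(1)] Pp that(2) by auto
  have G2: "g z = 0 \<or> qf (g z) = real n \<or> qf (g z) = real n + 1" if "z \<in> annA n - {zn}" for z
  proof -
    define v where "v = r (Q z)"
    have v: "v \<in> frontier K" using r(2) QnP that by (auto simp: v_def)
    show ?thesis
    proof (cases "\<bar>Im v\<bar> = 1")
      case True then show ?thesis using F3 by (simp add: g_def v_def[symmetric])
    next
      case False
      then have "\<bar>Im v\<bar> < 1" "v \<in> K" using v frK memK by auto
      then show ?thesis using F2[of v] v False frK by (auto simp: g_def v_def[symmetric])
    qed
  qed
  have G3: "g z = z" if "z \<in> annA n" "z = 0 \<or> qf z = real n \<or> qf z = real n + 1" for z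
  proof -
    have "Q z \<in> frontier K"
      using that F4[OF that(1)] iK by (auto simp: frK Q_def)
    then show ?thesis using r(3) F4[OF that(1)] by (simp add: g_def)
  qed
  have G4: "continuous_on (annA n - {zn}) g"
    unfolding continuous_on_sequentially
  proof (intro allI ballI impI, elim conjE)
    fix x z assume z: "z \<in> annA n - {zn}" and xin: "\<forall>j. x j \<in> annA n - {zn}" and xl: "x \<longlonglongrightarrow> z"
    show "(g \<circ> x) \<longlonglongrightarrow> g z"
    proof (rule subsubseq_tendsto)
      fix \<sigma> :: "nat \<Rightarrow> nat" assume \<sigma>: "strict_mono \<sigma>"
      have kK: "\<forall>j. Q (x (\<sigma> j)) \<in> K" using F4 xin by auto
      obtain k \<sigma>' where k: "k \<in> K" "strict_mono \<sigma>'" "((\<lambda>j. Q (x (\<sigma> j))) \<circ> \<sigma>') \<longlonglongrightarrow> k"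
        using seq_compactE[OF compact_imp_seq_compact[OF compact_cbox[of "Complex 0 (-1)" "Complex 1 1", folded K_def]] kK]
        by blast
      let ?k = "\<lambda>j. Q (x (\<sigma> (\<sigma>' j)))"
      have kl: "?k \<longlonglongrightarrow> k" using k(3) by (simp add: o_def)
      have kin: "?k j \<in> K" for j using kK by simp
      have Pk: "P (?k j) = x (\<sigma> (\<sigma>' j))" for j using F4 xin by auto
      have "(P \<circ> ?k) \<longlonglongrightarrow> P k"
        using cont_seq[OF contP k(1) kin kl] .
      moreover have "(P \<circ> ?k) \<longlonglongrightarrow> z"
        using LIMSEQ_subseq_LIMSEQ[OF xl strict_mono_o[OF \<sigma> k(2)]] Pk by (simp add: o_def)
      ultimately have Pkz: "P k = z" using LIMSEQ_unique by blast
      have kp: "k \<noteq> p" using Pkz Pp z by auto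
      have knp: "?k j \<noteq> p" for j using QnP xin by auto
      have "(r \<circ> ?k) \<longlonglongrightarrow> r k"
        using cont_seq[OF r(1), of k ?k] kp knp kl by blast
      then have "(P \<circ> (r \<circ> ?k)) \<longlonglongrightarrow> P (r k)"
        using cont_seq[OF contP, of "r k" "r \<circ> ?k"] r(2) kp knp frKK by auto
      moreover have "g (x (\<sigma> (\<sigma>' j))) = P (r (?k j))" for j
        using G1[OF kin knp] Pk by simp
      moreover have "g z = P (r k)" using G1[OF k(1) kp] Pkz by simp
      ultimately have "(g \<circ> x \<circ> \<sigma> \<circ> \<sigma>') \<longlonglongrightarrow> g z" by (simp add: o_def)
      then show "\<exists>r'::nat\<Rightarrow>nat. strict_mono r' \<and> (g \<circ> x \<circ> \<sigma> \<circ> r') \<longlonglongrightarrow> g z"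
        using k(2) by blast
    qed
  qed
  show ?thesis using G2 G3 G4 by blast
qed



lemma upY_mono: "M \<le> M' \<Longrightarrow> upY M \<subseteq> upY M'"
  by (auto simp: upY_def)

lemma lowY_sub_upY: "lowY 1 \<subseteq> upY N"
  by (auto simp: upY_def)

definition lev :: "nat \<Rightarrow> complex \<Rightarrow> nat" where
  "lev M w = (if w \<in> upY M then 0 else nat \<lfloor>qf w\<rfloor>)"

lemma lev_facts:
  assumes M: "M \<ge> 1" and w: "w \<in> HA_set" "w \<notin> upY M"
  shows "lev M w > M \<and> real (lev M w) < qf w \<and> qf w < real (lev M w) + 1 \<and> w \<noteq> 0"
proof -
  have w0: "w \<noteq> 0" and q1: "1 \<le> qf w" using w mem_HA[of w] mem_upY[OF M, of w] by auto
  have nint: "\<forall>i\<ge>1. qf w \<noteq> real i" and qM: "qf w > real M + 1"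
    using w mem_upY[OF M, of w] q1 by auto
  have l: "lev M w = nat \<lfloor>qf w\<rfloor>" using w by (simp add: lev_def)
  have fl: "real_of_int \<lfloor>qf w\<rfloor> \<le> qf w" "qf w < real_of_int \<lfloor>qf w\<rfloor> + 1" by linarith+
  have fge: "\<lfloor>qf w\<rfloor> \<ge> int M + 1" using qM by linarith
  then have rl: "real (lev M w) = real_of_int \<lfloor>qf w\<rfloor>" using l by simp
  have "lev M w \<ge> 1" using fge l by linarith
  then have "qf w \<noteq> real (lev M w)" using nint by blast
  then have "real (lev M w) < qf w" using fl rl by linarith
  moreover have "lev M w > M" using fge l by linarith
  ultimately show ?thesis using fl rl w0 by linarith
qed

lemma lev_interior:
  assumes M: "M \<ge> 1" and w: "w \<in> HA_set" "w \<notin> upY M"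
  shows "w \<in> interior (annA (lev M w))"
  using lev_facts[OF assms] interior_annA[of "lev M w"] M by auto

lemma in_upY_lev:
  assumes M: "M \<ge> 1" and w: "w \<in> HA_set"
  shows "w \<in> upY (max M (lev M w))"
proof (cases "w \<in> upY M")
  case True then show ?thesis using upY_mono[of M "max M (lev M w)"] by auto
next
  case False
  note f = lev_facts[OF M w False]
  have "1 \<le> qf w" using w f mem_HA by auto
  then show ?thesis using f M mem_upY[of "max M (lev M w)" w] by auto
qed

lemma null_seq:
  assumes "\<And>k. cmod (u k) \<le> 2 / real (m k)" "\<And>k. Suc k \<le> m k"
  shows "u \<longlonglongrightarrow> 0"
proof (rule Lim_null_comparison)
  show "\<forall>\<^sub>F k in sequentially. norm (u k) \<le> 2 * inverse (real (Suc k))"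
  proof (rule always_eventually, rule allI)
    fix k
    have "2 / real (m k) \<le> 2 / real (Suc k)"
      using assms(2)[of k] by (intro divide_left_mono) auto
    then show "norm (u k) \<le> 2 * inverse (real (Suc k))"
      using assms(1)[of k] by (simp add: divide_inverse)
  qed
  show "(\<lambda>k. 2 * inverse (real (Suc k))) \<longlonglongrightarrow> 0"
    using tendsto_mult_right_zero[OF LIMSEQ_inverse_real_of_nat] by simp
qed

lemma shift_seq:
  fixes \<rho> :: "nat \<Rightarrow> nat" and lv :: "nat \<Rightarrow> nat"
  assumes "strict_mono \<rho>" "strict_mono (lv \<circ> \<rho>)"
  shows "strict_mono (\<rho> \<circ> Suc) \<and> strict_mono (lv \<circ> (\<rho> \<circ> Suc)) \<and> (\<forall>k. Suc k \<le> lv ((\<rho> \<circ> Suc) k))"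
proof -
  have "strict_mono (\<rho> \<circ> Suc)" using assms(1) by (simp add: strict_mono_def)
  moreover have "strict_mono (lv \<circ> (\<rho> \<circ> Suc))" using assms(2) by (simp add: strict_mono_def)
  moreover have "Suc k \<le> lv ((\<rho> \<circ> Suc) k)" for k
    using strict_mono_imp_increasing[OF assms(2), of "Suc k"] by simp
  ultimately show ?thesis by blast
qed

lemma R_continuous:
  fixes zs :: "nat \<Rightarrow> complex" and \<rho> :: "nat \<Rightarrow> complex \<Rightarrow> complex"
  assumes N: "N \<ge> 1"
   and \<rho>: "\<forall>n\<ge>1. continuous_on (annA n - {zs n}) (\<rho> n)
          \<and> (\<forall>z \<in> annA n - {zs n}. \<rho> n z = 0 \<or> qf (\<rho> n z) = real n \<or> qf (\<rho> n z) = real n + 1)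
          \<and> (\<forall>z \<in> annA n. (z = 0 \<or> qf z = real n \<or> qf z = real n + 1) \<longrightarrow> \<rho> n z = z)"
   and E: "E = HA_set - zs ` {N<..}"
   and R: "R = (\<lambda>w. if w \<in> upY N then w else \<rho> (lev N w) w)"
  shows "continuous_on E R \<and> R \<in> E \<rightarrow> upY N"
proof -
  have outside: "lev N w > N \<and> real (lev N w) < qf w \<and> qf w < real (lev N w) + 1 \<and> w \<noteq> 0
       \<and> w \<in> annA (lev N w) - {zs (lev N w)} \<and> R w = \<rho> (lev N w) w"
    if "w \<in> E" "w \<notin> upY N" for w
  proof -
    have wH: "w \<in> HA_set" using that E by auto
    note f = lev_facts[OF N wH that(2)]
    have "w \<in> annA (lev N w)" using f mem_annA[of "lev N w" w] N by auto
    moreover have "w \<noteq> zs (lev N w)" using that f E by auto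
    ultimately show ?thesis using f that R by auto
  qed
  have rho_small: "\<rho> n w = 0 \<or> qf (\<rho> n w) = real n \<or> qf (\<rho> n w) = real n + 1"
    if "n \<ge> 1" "w \<in> annA n - {zs n}" for n w
    using \<rho> that by blast
  have maps: "R w \<in> upY N" if "w \<in> E" for w
  proof (cases "w \<in> upY N")
    case True then show ?thesis using R by simp
  next
    case False
    note o = outside[OF that False]
    have n1: "lev N w \<ge> 1" using o N by auto
    have "\<rho> (lev N w) w \<in> lowY 1"
      using rho_small[OF n1, of w] o mem_lowY1 n1
      by (metis of_nat_Suc add.commute Suc_le_mono le_SucI)
    then show ?thesis using o lowY_sub_upY by auto
  qed
  have cont: "continuous_on E R"
    unfolding continuous_on_sequentially
  proof (intro allI ballI impI, elim conjE)
    fix s x assume xE: "x \<in> E" and sE: "\<forall>j. s j \<in> E" and sx: "s \<longlonglongrightarrow> x"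
    show "(R \<circ> s) \<longlonglongrightarrow> R x"
    proof (rule subsubseq_tendsto)
      fix \<sigma> :: "nat \<Rightarrow> nat" assume \<sigma>: "strict_mono \<sigma>"
      define w where "w = s \<circ> \<sigma>"
      have wE: "w k \<in> E" for k using sE by (simp add: w_def)
      have wx: "w \<longlonglongrightarrow> x" unfolding w_def by (rule LIMSEQ_subseq_LIMSEQ[OF sx \<sigma>])
      from level_dichotomy[of "lev N \<circ> w"]
      show "\<exists>r'::nat\<Rightarrow>nat. strict_mono r' \<and> (R \<circ> s \<circ> \<sigma> \<circ> r') \<longlonglongrightarrow> R x"
      proof (elim disjE exE conjE)
        fix n and r0 :: "nat \<Rightarrow> nat"
        assume r0: "strict_mono r0" and ln: "\<forall>k. (lev N \<circ> w) (r0 k) = n"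
        have wrx: "(w \<circ> r0) \<longlonglongrightarrow> x" by (rule LIMSEQ_subseq_LIMSEQ[OF wx r0])
        show ?thesis
        proof (cases "n = 0")
          case True
          have inU: "w (r0 k) \<in> upY N" for k
          proof (rule ccontr)
            assume "w (r0 k) \<notin> upY N"
            then show False using outside[OF wE] ln True by fastforce
          qed
          have xU: "x \<in> upY N"
            using closed_upY[OF N] inU wrx by (intro Lim_in_closed_set[of "upY N" "w \<circ> r0" sequentially]) auto
          have "(R \<circ> s \<circ> \<sigma> \<circ> r0) = w \<circ> r0"
            using inU R by (auto simp: w_def o_def fun_eq_iff)
          moreover have "R x = x" using xU R by simp
          ultimately show ?thesis using wrx r0 by auto
        next
          case False
          then have n1: "n \<ge> 1" by simp
          have notU: "w (r0 k) \<notin> upY N" for k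
          proof
            assume "w (r0 k) \<in> upY N"
            then have "lev N (w (r0 k)) = 0" by (simp add: lev_def)
            then show False using ln False by simp
          qed
          have ok: "lev N (w (r0 k)) = n" for k using ln by simp
          have inA: "w (r0 k) \<in> annA n - {zs n}" and Rw: "R (w (r0 k)) = \<rho> n (w (r0 k))"
            and nN: "n > N" for k
            using outside[OF wE notU] ok by auto
          have xA: "x \<in> annA n"
            using closed_annA inA wrx by (intro Lim_in_closed_set[of "annA n" "w \<circ> r0" sequentially]) auto
          have nN': "n > N" using nN .
          have xz: "x \<noteq> zs n" using xE E nN' by auto
          have Rx: "R x = \<rho> n x"
          proof (cases "x \<in> upY N")
            case True
            then have Rx: "R x = x" using R by simp
            have "x = 0 \<or> qf x = real n \<or> qf x = real n + 1"
            proof -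
              have qa: "x = 0 \<or> (real n \<le> qf x \<and> qf x \<le> real n + 1)" using xA mem_annA[OF n1] by auto
              have qu: "x = 0 \<or> (\<exists>i\<ge>1. qf x = real i) \<or> (1 \<le> qf x \<and> qf x \<le> real N + 1)"
                using True mem_upY[OF N] by auto
              show ?thesis
              proof (cases "x = 0")
                case False
                then have q1: "real n \<le> qf x" "qf x \<le> real n + 1" using qa by auto
                from qu False show ?thesis
                proof (elim disjE exE conjE)
                  fix i assume "qf x = real i"
                  then have "n \<le> i" "i \<le> n + 1" using q1 by simp_all
                  then have "i = n \<or> i = n + 1" by auto
                  then show ?thesis using \<open>qf x = real i\<close> by auto
                next
                  assume "qf x \<le> real N + 1"
                  then have "qf x = real n" using q1 nN' by simp
                  then show ?thesis by simp
                qed simp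
              qed simp
            qed
            then have "\<rho> n x = x" using \<rho> n1 xA by blast
            then show ?thesis using Rx by simp
          next
            case False
            note o = outside[OF xE False]
            have "x \<noteq> 0" using o by simp
            then have q1: "real n \<le> qf x" "qf x \<le> real n + 1" using xA mem_annA[OF n1] by auto
            have "real (lev N x) < real n + 1" "real n < real (lev N x) + 1" using o q1 by linarith+
            then have "lev N x = n" by linarith
            then show ?thesis using o by simp
          qed
          have "(\<rho> n \<circ> (w \<circ> r0)) \<longlonglongrightarrow> \<rho> n x"
            using cont_seq[of "annA n - {zs n}" "\<rho> n" x "w \<circ> r0"] \<rho> n1 xA xz inA wrx by auto
          moreover have "R \<circ> s \<circ> \<sigma> \<circ> r0 = \<rho> n \<circ> (w \<circ> r0)"
            using Rw by (auto simp: w_def o_def fun_eq_iff)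
          ultimately show ?thesis using Rx r0 by auto
        qed
      next
        fix r0 :: "nat \<Rightarrow> nat"
        assume r0: "strict_mono r0" and lr: "strict_mono ((lev N \<circ> w) \<circ> r0)"
        define r' where "r' = r0 \<circ> Suc"
        have sh: "strict_mono r'" "\<And>k. Suc k \<le> lev N (w (r' k))"
          using shift_seq[OF r0 lr] by (auto simp: r'_def)
        define m where "m k = lev N (w (r' k))" for k
        have notU: "w (r' k) \<notin> upY N" for k using sh(2)[of k] by (auto simp: lev_def)
        have o: "lev N (w (r' k)) > N \<and> real (lev N (w (r' k))) < qf (w (r' k))
               \<and> w (r' k) \<in> annA (lev N (w (r' k))) - {zs (lev N (w (r' k)))}
               \<and> R (w (r' k)) = \<rho> (lev N (w (r' k))) (w (r' k))" for k
          using outside[OF wE notU] by auto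
        have m1: "m k \<ge> 1" for k using o[of k] N by (simp add: m_def)
        have b1: "cmod (w (r' k)) \<le> 2 / real (m k)" for k
        proof -
          have "0 < real (m k)" using m1[of k] by simp
          moreover have "real (m k) < qf (w (r' k))" using o[of k] by (simp add: m_def)
          ultimately have "cmod (w (r' k)) \<le> 2 / qf (w (r' k))" by (intro norm_le_qf) simp
          also have "\<dots> \<le> 2 / real (m k)"
            using \<open>0 < real (m k)\<close> \<open>real (m k) < qf (w (r' k))\<close> by (intro divide_left_mono) auto
          finally show ?thesis .
        qed
        have "(\<lambda>k. w (r' k)) \<longlonglongrightarrow> 0"
          using null_seq[of "\<lambda>k. w (r' k)" m] b1 sh(2) by (simp add: m_def)
        moreover have "(\<lambda>k. w (r' k)) \<longlonglongrightarrow> x"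
          using LIMSEQ_subseq_LIMSEQ[OF wx sh(1)] by (simp add: o_def)
        ultimately have x0: "x = 0" using LIMSEQ_unique by blast
        have Rx: "R x = 0" using x0 R mem_upY[OF N, of 0] by simp
        have b2: "cmod (R (w (r' k))) \<le> 2 / real (m k)" for k
        proof -
          have rs: "\<rho> (m k) (w (r' k)) = 0 \<or> qf (\<rho> (m k) (w (r' k))) = real (m k)
                 \<or> qf (\<rho> (m k) (w (r' k))) = real (m k) + 1"
            using rho_small[OF m1[of k]] o[of k] by (simp add: m_def)
          have Rw: "R (w (r' k)) = \<rho> (m k) (w (r' k))" using o[of k] by (simp add: m_def)
          have pos: "0 < real (m k)" using m1[of k] by simp
          show ?thesis
          proof (cases "\<rho> (m k) (w (r' k)) = 0")
            case True then show ?thesis using Rw pos by simp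
          next
            case False
            then have qq: "real (m k) \<le> qf (\<rho> (m k) (w (r' k)))" using rs by auto
            then have "cmod (\<rho> (m k) (w (r' k))) \<le> 2 / qf (\<rho> (m k) (w (r' k)))"
              using pos by (intro norm_le_qf) simp
            also have "\<dots> \<le> 2 / real (m k)" using pos qq by (intro divide_left_mono) auto
            finally show ?thesis using Rw by simp
          qed
        qed
        have "(\<lambda>k. R (w (r' k))) \<longlonglongrightarrow> 0"
          using null_seq[of "\<lambda>k. R (w (r' k))" m] b2 sh(2) by (simp add: m_def)
        then have "(R \<circ> s \<circ> \<sigma> \<circ> r') \<longlonglongrightarrow> R x" using Rx by (simp add: w_def o_def)
        then show ?thesis using sh(1) by blast
      qed
    qed
  qed
  show ?thesis using cont maps by auto
qed


lemma T_limit: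
  fixes D :: "'a::metric_space set"
  assumes Hc: "continuous_map (top_of_set D) T H"
    and "d \<in> D" "\<And>j. s j \<in> D" "s \<longlonglongrightarrow> d"
  shows "limitin T (H \<circ> s) (H d) sequentially"
proof -
  have "limitin (top_of_set D) s d sequentially"
    using assms by (simp add: limitin_subtopology)
  then show ?thesis by (rule continuous_map_limit[OF Hc])
qed

lemma H_continuous:
  fixes D :: "'a::metric_space set" and zs :: "nat \<Rightarrow> complex"
  assumes top: "topspace T = HA_set"
    and sub: "\<forall>n\<ge>1. subtopology T (upY n) = top_of_set (upY n)"
    and zsI: "\<forall>n\<ge>1. zs n \<in> interior (annA n)"
    and lim0: "\<forall>y p. (\<forall>n\<ge>1. y n \<in> interior (annA n)) \<and> subseq_limit T y p \<longrightarrow> p = 0"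
    and Hc: "continuous_map (top_of_set D) T H"
  shows "continuous_on D H \<and> H ` D \<subseteq> HA_set"
proof -
  have HD: "H ` D \<subseteq> HA_set"
    using continuous_map_image_subset_topspace[OF Hc] top by simp
  have "continuous_on D H"
    unfolding continuous_on_sequentially
  proof (intro allI ballI impI, elim conjE)
    fix s d assume dD: "d \<in> D" and sD: "\<forall>j. s j \<in> D" and sd: "s \<longlonglongrightarrow> d"
    show "(H \<circ> s) \<longlonglongrightarrow> H d"
    proof (rule subsubseq_tendsto)
      fix \<sigma> :: "nat \<Rightarrow> nat" assume \<sigma>: "strict_mono \<sigma>"
      define ss where "ss = s \<circ> \<sigma>"
      define w where "w = H \<circ> ss"
      have ssD: "ss k \<in> D" for k using sD by (simp add: ss_def)
      have ssd: "ss \<longlonglongrightarrow> d" unfolding ss_def by (rule LIMSEQ_subseq_LIMSEQ[OF sd \<sigma>])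
      have wH: "w k \<in> HA_set" for k using HD ssD by (auto simp: w_def)
      have Tl: "limitin T (H \<circ> (ss \<circ> r)) (H d) sequentially" if "strict_mono r" for r
        using T_limit[OF Hc dD, of "ss \<circ> r"] ssD LIMSEQ_subseq_LIMSEQ[OF ssd that] by simp
      from level_dichotomy[of "lev 1 \<circ> w"]
      show "\<exists>r'::nat\<Rightarrow>nat. strict_mono r' \<and> (H \<circ> s \<circ> \<sigma> \<circ> r') \<longlonglongrightarrow> H d"
      proof (elim disjE exE conjE)
        fix n and r0 :: "nat \<Rightarrow> nat"
        assume r0: "strict_mono r0" and ln: "\<forall>k. (lev 1 \<circ> w) (r0 k) = n"
        obtain Md where Md: "Md \<ge> 1" "H d \<in> upY Md"
          using HD dD by (auto simp: HA_set_def)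
        define M where "M = max (max 1 n) Md"
        have M1: "M \<ge> 1" by (simp add: M_def)
        have inM: "w (r0 k) \<in> upY M" for k
        proof -
          have "w (r0 k) \<in> upY (max 1 (lev 1 (w (r0 k))))"
            using in_upY_lev[of 1, OF _ wH] by simp
          moreover have "lev 1 (w (r0 k)) = n" using ln by simp
          ultimately show ?thesis using upY_mono[of "max 1 n" M] by (auto simp: M_def)
        qed
        have dM: "H d \<in> upY M" using Md upY_mono[of Md M] by (auto simp: M_def)
        have "limitin (subtopology T (upY M)) (H \<circ> (ss \<circ> r0)) (H d) sequentially"
          using Tl[OF r0] dM inM by (simp add: limitin_subtopology w_def o_def)
        then have "limitin (top_of_set (upY M)) (H \<circ> (ss \<circ> r0)) (H d) sequentially"
          using sub M1 by simp
        then have "(H \<circ> (ss \<circ> r0)) \<longlonglongrightarrow> H d"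
          by (simp add: limitin_subtopology)
        then show ?thesis using r0 by (auto simp: ss_def o_def)
      next
        fix r0 :: "nat \<Rightarrow> nat"
        assume r0: "strict_mono r0" and lr: "strict_mono ((lev 1 \<circ> w) \<circ> r0)"
        define r' where "r' = r0 \<circ> Suc"
        have sh: "strict_mono r'" "strict_mono ((lev 1 \<circ> w) \<circ> r')" "\<And>k. Suc k \<le> lev 1 (w (r' k))"
          using shift_seq[OF r0 lr] by (auto simp: r'_def)
        define m where "m k = lev 1 (w (r' k))" for k
        have msm: "strict_mono m" using sh(2) by (simp add: m_def o_def strict_mono_def)
        have notU: "w (r' k) \<notin> upY 1" for k using sh(3)[of k] by (auto simp: lev_def)
        have wint: "w (r' k) \<in> interior (annA (m k))" for k
          using lev_interior[of 1, OF _ wH notU] by (simp add: m_def)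
        have wq: "real (m k) < qf (w (r' k))" for k
          using lev_facts[of 1, OF _ wH notU] by (simp add: m_def)
        define y where "y n = (if n \<in> range m then w (r' (inv m n)) else zs n)" for n
        have injm: "inj m" using msm strict_mono_imp_inj_on by blast
        have ym: "y (m k) = w (r' k)" for k using injm by (simp add: y_def)
        have yint: "\<forall>n\<ge>1. y n \<in> interior (annA n)"
        proof (intro allI impI)
          fix n :: nat assume "n \<ge> 1"
          show "y n \<in> interior (annA n)"
          proof (cases "n \<in> range m")
            case True
            then obtain k where "n = m k" by auto
            then show ?thesis using ym wint by simp
          next
            case False then show ?thesis using zsI \<open>n \<ge> 1\<close> by (simp add: y_def)
          qed
        qed
        have "y \<circ> m = H \<circ> (ss \<circ> r')" using ym by (auto simp: w_def fun_eq_iff)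
        then have "limitin T (y \<circ> m) (H d) sequentially" using Tl[OF sh(1)] by simp
        then have "subseq_limit T y (H d)" using msm by (auto simp: subseq_limit_def)
        then have Hd0: "H d = 0" using lim0 yint by blast
        have b: "cmod (w (r' k)) \<le> 2 / real (m k)" for k
        proof -
          have pos: "0 < real (m k)" using sh(3)[of k] by (simp add: m_def)
          then have "cmod (w (r' k)) \<le> 2 / qf (w (r' k))" using wq[of k] by (intro norm_le_qf) simp
          also have "\<dots> \<le> 2 / real (m k)" using pos wq[of k] by (intro divide_left_mono) auto
          finally show ?thesis .
        qed
        have "(\<lambda>k. w (r' k)) \<longlonglongrightarrow> 0"
          using null_seq[of "\<lambda>k. w (r' k)" m] b sh(3) by (simp add: m_def)
        then have "(H \<circ> s \<circ> \<sigma> \<circ> r') \<longlonglongrightarrow> H d" using Hd0 by (simp add: w_def ss_def o_def)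
        then show ?thesis using sh(1) by blast
      qed
    qed
  qed
  then show ?thesis using HD by blast
qed

lemma zs_missing:
  fixes D :: "'a::metric_space set" and zs :: "nat \<Rightarrow> complex"
  assumes Hc: "continuous_map (top_of_set D) T H" and cD: "compact D"
    and nolim: "\<not> (\<exists>p. subseq_limit T zs p)"
  shows "\<exists>N0. \<forall>n>N0. zs n \<notin> H ` D"
proof (rule ccontr)
  assume "\<not> (\<exists>N0. \<forall>n>N0. zs n \<notin> H ` D)"
  then have "infinite {n. zs n \<in> H ` D}"
    unfolding infinite_nat_iff_unbounded by auto
  then obtain m :: "nat \<Rightarrow> nat" where m: "strict_mono m" "\<And>k. m k \<in> {n. zs n \<in> H ` D}"
    using infinite_enumerate by blast
  have "\<forall>k. \<exists>x. x \<in> D \<and> zs (m k) = H x" using m(2) by blast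
  then obtain dd where dd: "\<And>k. dd k \<in> D" "\<And>k. zs (m k) = H (dd k)" by metis
  obtain l \<tau> where l: "l \<in> D" "strict_mono (\<tau> :: nat \<Rightarrow> nat)" "(dd \<circ> \<tau>) \<longlonglongrightarrow> l"
    using seq_compactE[OF compact_imp_seq_compact[OF cD], of dd] dd(1) by blast
  have "limitin T (H \<circ> (dd \<circ> \<tau>)) (H l) sequentially"
    using T_limit[OF Hc l(1), of "dd \<circ> \<tau>"] dd(1) l(3) by simp
  moreover have "H \<circ> (dd \<circ> \<tau>) = zs \<circ> (m \<circ> \<tau>)" using dd(2) by (auto simp: fun_eq_iff)
  ultimately have "subseq_limit T zs (H l)"
    unfolding subseq_limit_def using strict_mono_o[OF m(1) l(2)] by auto
  then show False using nolim by blast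
qed

theorem lemma4:
  fixes T :: "complex topology" and f :: "complex \<Rightarrow> complex"
  assumes "HA_topology T"
    and "continuous_map (top_of_set (sphere 0 1)) (top_of_set (lowY 1)) f"
  shows "inessential_in T f \<longleftrightarrow> (\<exists>N\<ge>1. inessential_in (top_of_set (upY N)) f)"
proof
  assume "\<exists>N\<ge>1. inessential_in (top_of_set (upY N)) f"
  then obtain N c where N: "N \<ge> 1"
    and h: "homotopic_with (\<lambda>_. True) (top_of_set (sphere 0 1)) (top_of_set (upY N)) f (\<lambda>_. c)"
    by (auto simp: inessential_in_def)
  have sub: "subtopology T (upY N) = top_of_set (upY N)"
    using assms(1) N by (simp add: HA_topology_def)
  have "continuous_map (top_of_set (upY N)) T id"
    using continuous_map_id_subt[of T "upY N"] sub by simp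
  from homotopic_with_compose_continuous_map_left[OF h this]
  have "homotopic_with (\<lambda>_. True) (top_of_set (sphere 0 1)) T f (\<lambda>_. c)" by (simp add: o_def)
  then show "inessential_in T f" by (auto simp: inessential_in_def)
next
  assume "inessential_in T f"
  then obtain c where "homotopic_with (\<lambda>_. True) (top_of_set (sphere 0 1)) T f (\<lambda>_. c)"
    by (auto simp: inessential_in_def)
  then obtain H :: "real \<times> complex \<Rightarrow> complex" where Hc0: "continuous_map (top_of_set ({0..1} \<times> sphere 0 1)) T H"
    and H0: "\<And>x. H (0, x) = f x" and H1: "\<And>x. H (1, x) = c"
    unfolding homotopic_with_def by auto
  define D where "D = {0..1::real} \<times> sphere (0::complex) 1"
  have Hc: "continuous_map (top_of_set D) T H" using Hc0 by (simp add: D_def)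
  from assms(1) obtain zs where top: "topspace T = HA_set"
    and sub: "\<forall>n\<ge>1. subtopology T (upY n) = top_of_set (upY n)"
    and zsI: "\<forall>n\<ge>1. zs n \<in> interior (annA n)" and nolim: "\<not> (\<exists>p. subseq_limit T zs p)"
    and lim0: "\<forall>y p. (\<forall>n\<ge>1. y n \<in> interior (annA n)) \<and> subseq_limit T y p \<longrightarrow> p = 0"
    unfolding HA_topology_def by blast
  have HcD: "continuous_on D H" and HD: "H ` D \<subseteq> HA_set"
    using H_continuous[OF top sub zsI lim0 Hc] by auto
  have cD: "compact D" unfolding D_def by (intro compact_Times compact_Icc compact_sphere)
  obtain N0 where N0: "\<forall>n>N0. zs n \<notin> H ` D" using zs_missing[OF Hc cD nolim] by blast
  have "(1, 1) \<in> D" by (simp add: D_def)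
  then have cH: "c \<in> HA_set" using HD H1[of 1] by force
  then obtain Mc where Mc: "Mc \<ge> 1" "c \<in> upY Mc" by (auto simp: HA_set_def)
  define N where "N = max (max N0 Mc) 1"
  have N1: "N \<ge> 1" by (simp add: N_def)
  have cN: "c \<in> upY N" using Mc upY_mono[of Mc N] by (auto simp: N_def)
  have "\<forall>n. \<exists>g. n \<ge> 1 \<longrightarrow> (continuous_on (annA n - {zs n}) g
          \<and> (\<forall>z \<in> annA n - {zs n}. g z = 0 \<or> qf (g z) = real n \<or> qf (g z) = real n + 1)
          \<and> (\<forall>z \<in> annA n. (z = 0 \<or> qf z = real n \<or> qf z = real n + 1) \<longrightarrow> g z = z))"
  proof (intro allI)
    fix n :: nat
    show "\<exists>g. n \<ge> 1 \<longrightarrow> (continuous_on (annA n - {zs n}) g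
          \<and> (\<forall>z \<in> annA n - {zs n}. g z = 0 \<or> qf (g z) = real n \<or> qf (g z) = real n + 1)
          \<and> (\<forall>z \<in> annA n. (z = 0 \<or> qf z = real n \<or> qf z = real n + 1) \<longrightarrow> g z = z))"
    proof (cases "n \<ge> 1")
      case True
      then have "real n < qf (zs n)" "qf (zs n) < real n + 1"
        using zsI interior_annA[OF True] by auto
      then show ?thesis using annulus_retraction[OF True] by blast
    qed auto
  qed
  then obtain \<rho> where \<rho>: "\<forall>n\<ge>1. continuous_on (annA n - {zs n}) (\<rho> n)
          \<and> (\<forall>z \<in> annA n - {zs n}. \<rho> n z = 0 \<or> qf (\<rho> n z) = real n \<or> qf (\<rho> n z) = real n + 1)
          \<and> (\<forall>z \<in> annA n. (z = 0 \<or> qf z = real n \<or> qf z = real n + 1) \<longrightarrow> \<rho> n z = z)"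
    by metis
  define E where "E = HA_set - zs ` {N<..}"
  define R where "R = (\<lambda>w. if w \<in> upY N then w else \<rho> (lev N w) w)"
  have RE: "continuous_on E R \<and> R \<in> E \<rightarrow> upY N"
    using R_continuous[OF N1 \<rho> E_def R_def] .
  have HE: "H ` D \<subseteq> E"
  proof
    fix y assume y: "y \<in> H ` D"
    have "y \<notin> zs ` {N<..}"
    proof
      assume "y \<in> zs ` {N<..}"
      then obtain n where "n > N" "y = zs n" by auto
      then show False using N0 y by (auto simp: N_def)
    qed
    then show "y \<in> E" using y HD by (auto simp: E_def)
  qed
  have hE: "homotopic_with (\<lambda>_. True) (top_of_set (sphere 0 1)) (top_of_set E) f (\<lambda>_. c)"
    unfolding homotopic_with_def
  proof (intro exI conjI allI ballI)
    show "continuous_map (prod_topology (top_of_set {0..1}) (top_of_set (sphere 0 1))) (top_of_set E) H"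
      using HcD HE by (auto simp: D_def)
  qed (auto simp: H0 H1)
  have cR: "continuous_map (top_of_set E) (top_of_set (upY N)) R" using RE by simp
  have h2: "homotopic_with (\<lambda>_. True) (top_of_set (sphere 0 1)) (top_of_set (upY N)) (R \<circ> f) (R \<circ> (\<lambda>_. c))"
    by (rule homotopic_with_compose_continuous_map_left[OF hE cR]) simp
  have fY: "f x \<in> upY N" if "x \<in> sphere 0 1" for x
  proof -
    have "f \<in> sphere 0 1 \<rightarrow> lowY 1" using assms(2) by (simp add: continuous_map_in_subtopology)
    then have "f x \<in> lowY 1" using that by blast
    then show ?thesis using lowY_sub_upY by blast
  qed
  have "homotopic_with (\<lambda>_. True) (top_of_set (sphere 0 1)) (top_of_set (upY N)) f (\<lambda>_. c)"
    by (rule homotopic_with_eq[OF h2]) (auto simp: R_def fY cN)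
  then show "\<exists>N\<ge>1. inessential_in (top_of_set (upY N)) f"
    using N1 by (auto simp: inessential_in_def)
qed


end
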